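(* Let $\{\mathbb{G}_n,\ n=2,3,\ldots\}$ be a sequence of random graphs as described in the context, with $\lim_{n\to\infty}|V_n|=\infty$, satisfying: (A) for each $n$, $D_{n,k}$ has the same distribution as $D_{n,1}$ for all $k\in V_n$, and for all distinct $k,\ell\in V_n$, $(D_{n,k},D_{n,\ell})$ has the same joint distribution as $(D_{n,1},D_{n,2})$; (B) there is an $\mathbb{N}$-valued random variable $D$ with pmf $p=(p(d),\ d=0,1,\ldots)$ such that $D_{n,1}\to D$ in distribution; (C) for each $d=0,1,\ldots$, $\lim_{n\to\infty}\mathrm{Cov}\big[\mathbf{1}[D_{n,1}=d],\mathbf{1}[D_{n,2}=d]\big]=0$. Then $d_{\mathrm{TV}}(P_n,p)\to 0$ in probability as $n\to\infty$.
   Context: All random variables are defined on a common probability space $(\Omega,\mathcal{F},\mathbb{P})$. For each $n=2,3,\ldots$, $\mathbb{G}_n$ is a random (possibly directed, self-loops allowed) graph on the deterministic finite node set $V_n=\{1,\ldots,k_n\}$ with $k_n\ge 2$, determined by $\{0,1\}$-valued edge random variables $\{\chi_n(k,\ell),\ k,\ell\in V_n\}$. The degree of node $k$ is $D_{n,k}=\sum_{\ell\in V_n}\chi_n(k,\ell)$. For $d=0,1,\ldots$, $P_n(d)=\frac{1}{|V_n|}\sum_{k\in V_n}\mathbf{1}[D_{n,k}=d]$, and $P_n=(P_n(d),\ d=0,1,\ldots)$ is the (random) empirical degree pmf on $\mathbb{N}=\{0,1,\ldots\}$. For pmfs $\mu,\nu$ on $\mathbb{N}$, $d_{\mathrm{TV}}(\mu,\nu)=\frac12\sum_{x=0}^\infty|\mu(x)-\nu(x)|$.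 *)

theory Defs
  imports "HOL-Probability.Probability"
begin

definition degree :: "(nat \<Rightarrow> nat) \<Rightarrow> (nat \<Rightarrow> nat \<Rightarrow> nat \<Rightarrow> 'a \<Rightarrow> bool) \<Rightarrow> nat \<Rightarrow> nat \<Rightarrow> 'a \<Rightarrow> nat" where
  "degree kn X n k \<omega> = card {l \<in> {1..kn n}. X n k l \<omega>}"

definition emp_pmf :: "(nat \<Rightarrow> nat) \<Rightarrow> (nat \<Rightarrow> nat \<Rightarrow> nat \<Rightarrow> 'a \<Rightarrow> bool) \<Rightarrow> nat \<Rightarrow> 'a \<Rightarrow> nat \<Rightarrow> real" where
  "emp_pmf kn X n \<omega> d = real (card {k \<in> {1..kn n}. degree kn X n k \<omega> = d}) / real (kn n)"

definition dTV :: "(nat \<Rightarrow> real) \<Rightarrow> (nat \<Rightarrow> real) \<Rightarrow> real" where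
  "dTV \<mu> \<nu> = (1/2) * (\<Sum>x. \<bar>\<mu> x - \<nu> x\<bar>)"

definition covariance :: "'a measure \<Rightarrow> ('a \<Rightarrow> real) \<Rightarrow> ('a \<Rightarrow> real) \<Rightarrow> real" where
  "covariance M X Y = (\<integral>\<omega>. (X \<omega> - (\<integral>x. X x \<partial>M)) * (Y \<omega> - (\<integral>x. Y x \<partial>M)) \<partial>M)"

end

theory Submission
  imports Defs
begin

lemma arith_aux: "(S::real) \<le> 2 * P + 2 * t \<Longrightarrow> P \<le> e/2 \<Longrightarrow> t < e/4 \<Longrightarrow> e > 0 \<Longrightarrow> 1/2 * S < e"
  by linarith

lemma card_filter_sum: "finite A \<Longrightarrow> real (card {l\<in>A. P l}) = (\<Sum>l\<in>A. if P l then 1 else 0)"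
  by (simp add: sum.If_cases Int_def)

lemma degree_le: "degree kn X n k \<omega> \<le> kn n"
proof -
  have "degree kn X n k \<omega> \<le> card {1..kn n}" unfolding degree_def by (rule card_mono) auto
  then show ?thesis by simp
qed

lemma emp_sums: assumes "kn n > 0" shows "(\<lambda>d. emp_pmf kn X n \<omega> d) sums 1"
proof -
  let ?A = "{1..kn n}"
  have z: "emp_pmf kn X n \<omega> d = 0" if "d \<notin> {..kn n}" for d
  proof -
    have "{k \<in> ?A. degree kn X n k \<omega> = d} = {}" using that degree_le[of kn X n _ \<omega>] by force
    then show ?thesis unfolding emp_pmf_def by simp
  qed
  have grp: "(\<Sum>d\<in>{..kn n}. card {k \<in> ?A. degree kn X n k \<omega> = d}) = card ?A"
  proof -
    have "(\<Sum>d\<in>{..kn n}. \<Sum>k\<in>{k \<in> ?A. degree kn X n k \<omega> = d}. (1::nat)) = (\<Sum>k\<in>?A. 1)"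
      by (rule sum.group) (use degree_le in auto)
    then show ?thesis by simp
  qed
  have "(\<lambda>d. emp_pmf kn X n \<omega> d) sums (\<Sum>d\<in>{..kn n}. emp_pmf kn X n \<omega> d)"
    by (rule sums_finite) (use z in auto)
  also have "(\<Sum>d\<in>{..kn n}. emp_pmf kn X n \<omega> d) = real (\<Sum>d\<in>{..kn n}. card {k \<in> ?A. degree kn X n k \<omega> = d}) / real (kn n)"
    unfolding emp_pmf_def by (simp add: sum_divide_distrib)
  also have "\<dots> = 1" unfolding grp using assms by simp
  finally show ?thesis .
qed

lemma tv_bound:
  fixes a b :: "nat \<Rightarrow> real"
  assumes a: "a sums 1" and b: "b sums 1" and a0: "\<And>d. a d \<ge> 0" and b0: "\<And>d. b d \<ge> 0"
  shows "(\<Sum>d. \<bar>a d - b d\<bar>) \<le> 2 * (\<Sum>d<N. \<bar>a d - b d\<bar>) + 2 * (1 - (\<Sum>d<N. b d))"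
proof -
  have sa: "summable a" and sb: "summable b" using a b by (auto simp: sums_iff)
  have sab: "summable (\<lambda>d. \<bar>a d - b d\<bar>)"
    by (rule summable_comparison_test[where g="\<lambda>d. a d + b d"])
       (use a0 b0 sa sb in \<open>auto intro!: summable_add exI[of _ 0] simp: abs_le_iff\<close>)
  have ta: "(\<Sum>j. a (j + N)) = 1 - (\<Sum>d<N. a d)"
    using suminf_split_initial_segment[OF sa, of N] a by (simp add: sums_iff)
  have tb: "(\<Sum>j. b (j + N)) = 1 - (\<Sum>d<N. b d)"
    using suminf_split_initial_segment[OF sb, of N] b by (simp add: sums_iff)
  have "(\<Sum>j. \<bar>a (j + N) - b (j + N)\<bar>) \<le> (\<Sum>j. a (j + N) + b (j + N))"
    by (intro suminf_le summable_ignore_initial_segment sab summable_add sa sb)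
       (use a0 b0 in \<open>auto simp: abs_le_iff\<close>)
  also have "\<dots> = (\<Sum>j. a (j + N)) + (\<Sum>j. b (j + N))"
    by (intro suminf_add[symmetric] summable_ignore_initial_segment sa sb)
  finally have tail: "(\<Sum>j. \<bar>a (j + N) - b (j + N)\<bar>) \<le> (1 - (\<Sum>d<N. a d)) + (1 - (\<Sum>d<N. b d))"
    unfolding ta tb .
  have "(\<Sum>d<N. b d) - (\<Sum>d<N. a d) \<le> (\<Sum>d<N. \<bar>a d - b d\<bar>)"
    unfolding sum_subtractf[symmetric] by (intro sum_mono) auto
  then show ?thesis
    using suminf_split_initial_segment[OF sab, of N] tail by argo
qed

context
  fixes M :: "'a measure" and kn :: "nat \<Rightarrow> nat" and X :: "nat \<Rightarrow> nat \<Rightarrow> nat \<Rightarrow> 'a \<Rightarrow> bool"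
  assumes PS: "prob_space M"
    and meas: "\<And>n k l. X n k l \<in> measurable M (count_space UNIV)"
begin

interpretation prob_space M by (rule PS)

lemma deg_real_meas: "(\<lambda>\<omega>. real (degree kn X n k \<omega>)) \<in> borel_measurable M"
proof -
  have [measurable]: "\<And>l. X n k l \<in> measurable M (count_space UNIV)" using meas by auto
  show ?thesis unfolding degree_def by (subst card_filter_sum) auto
qed

lemma deg_meas: "degree kn X n k \<in> measurable M (count_space UNIV)"
proof -
  have "\<And>a. {\<omega>\<in>space M. real (degree kn X n k \<omega>) = real a} \<in> sets M"
    using deg_real_meas by measurable
  then show ?thesis unfolding measurable_count_space_eq2_countable
    by (auto simp: Int_def conj_commute)
qed

lemma deg_pair_meas: "(\<lambda>\<omega>. (degree kn X n k \<omega>, degree kn X n l \<omega>)) \<in> measurable M (count_space UNIV)"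
proof -
  have [measurable]: "degree kn X n k \<in> measurable M (count_space UNIV)" "degree kn X n l \<in> measurable M (count_space UNIV)"
    using deg_meas by auto
  have "\<And>a b. {\<omega>\<in>space M. degree kn X n k \<omega> = a \<and> degree kn X n l \<omega> = b} \<in> sets M"
    by measurable
  then show ?thesis unfolding measurable_count_space_eq2_countable
    by (auto simp: Int_def conj_commute vimage_def)
qed

lemma ind_meas: "(\<lambda>\<omega>. if degree kn X n k \<omega> = d then 1 else (0::real)) \<in> borel_measurable M"
proof -
  have [measurable]: "degree kn X n k \<in> measurable M (count_space UNIV)" using deg_meas by auto
  show ?thesis by measurable
qed

lemma emp_eq: "emp_pmf kn X n \<omega> d = (\<Sum>k\<in>{1..kn n}. if degree kn X n k \<omega> = d then 1 else 0) / real (kn n)"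
  unfolding emp_pmf_def by (subst card_filter_sum) auto

lemma emp_meas: "(\<lambda>\<omega>. emp_pmf kn X n \<omega> d) \<in> borel_measurable M"
  unfolding emp_eq using ind_meas by auto

lemma ind_int: "integrable M (\<lambda>\<omega>. f (degree kn X n k \<omega>) :: real)" if "\<And>a. \<bar>f a\<bar> \<le> B"
  apply (rule integrable_const_bound[where B=B])
  using that apply simp
  using deg_meas[of n k] by (simp add: measurable_compose[OF _ borel_measurable_count_space])

lemma pair_int: "integrable M (\<lambda>\<omega>. f (degree kn X n k \<omega>) (degree kn X n l \<omega>) :: real)" if "\<And>a b. \<bar>f a b\<bar> \<le> B"
proof -
  have "(\<lambda>\<omega>. case_prod f (degree kn X n k \<omega>, degree kn X n l \<omega>)) \<in> borel_measurable M"
    using deg_pair_meas[of n k l] by (rule measurable_compose) simp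
  then show ?thesis
    by (intro integrable_const_bound[where B=B]) (use that in auto)
qed

lemma distr_int_eq:
  assumes "distr M (count_space UNIV) F = distr M (count_space UNIV) G"
    and "F \<in> measurable M (count_space UNIV)" "G \<in> measurable M (count_space UNIV)"
  shows "expectation (\<lambda>\<omega>. h (F \<omega>) :: real) = expectation (\<lambda>\<omega>. h (G \<omega>))"
proof -
  have "expectation (\<lambda>\<omega>. h (F \<omega>)) = integral\<^sup>L (distr M (count_space UNIV) F) h"
    by (rule integral_distr[symmetric]) (use assms in auto)
  also have "\<dots> = integral\<^sup>L (distr M (count_space UNIV) G) h" using assms(1) by simp
  also have "\<dots> = expectation (\<lambda>\<omega>. h (G \<omega>))"
    by (rule integral_distr) (use assms in auto)
  finally show ?thesis .
qed

lemma mom_bound: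
  fixes n d :: nat
  assumes K2: "2 \<le> kn n"
    and A1': "distr M (count_space UNIV) (degree kn X n 2) = distr M (count_space UNIV) (degree kn X n 1)"
    and A2': "\<And>k l. k \<in> {1..kn n} \<Longrightarrow> l \<in> {1..kn n} \<Longrightarrow> k \<noteq> l \<Longrightarrow>
           distr M (count_space UNIV) (\<lambda>\<omega>. (degree kn X n k \<omega>, degree kn X n l \<omega>))
         = distr M (count_space UNIV) (\<lambda>\<omega>. (degree kn X n 1 \<omega>, degree kn X n 2 \<omega>))"
  defines "q \<equiv> expectation (\<lambda>\<omega>. if degree kn X n 1 \<omega> = d then 1 else (0::real))"
  shows "expectation (\<lambda>\<omega>. (emp_pmf kn X n \<omega> d - q)^2) \<le> 1 / real (kn n)
          + \<bar>covariance M (\<lambda>\<omega>. if degree kn X n 1 \<omega> = d then 1 else 0)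
                             (\<lambda>\<omega>. if degree kn X n 2 \<omega> = d then 1 else 0)\<bar>"
proof -
  define K where "K = kn n"
  define A where "A = {1..K}"
  define h :: "nat \<Rightarrow> real" where "h a = (if a = d then 1 else 0)" for a
  define I where "I k \<omega> = h (degree kn X n k \<omega>)" for k \<omega>
  define c where "c = covariance M (I 1) (I 2)"
  have Kpos: "real K > 0" using K2 unfolding K_def by simp
  have h01: "0 \<le> h a" "h a \<le> 1" for a unfolding h_def by auto
  have intI: "integrable M (I k)" for k unfolding I_def
    by (rule ind_int[where B=1]) (use h01 in auto)
  have q_def': "q = expectation (I 1)" unfolding q_def I_def h_def by simp
  have q0: "0 \<le> q" unfolding q_def' I_def using h01 by (simp add: integral_nonneg_AE)
  have q1: "q \<le> 1"
  proof -
    have "expectation (I 1) \<le> expectation (\<lambda>_. 1::real)"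
      by (rule integral_mono) (use intI h01 in \<open>auto simp: I_def\<close>)
    then show ?thesis unfolding q_def' by (simp add: prob_space)
  qed
  have prodb: "\<bar>(h a - q) * (h b - q)\<bar> \<le> 1" for a b
  proof -
    have "\<bar>h a - q\<bar> \<le> 1" "\<bar>h b - q\<bar> \<le> 1" using h01[of a] h01[of b] q0 q1 by (auto simp: abs_le_iff)
    then show ?thesis by (simp add: abs_mult mult_le_one)
  qed
  have intP: "integrable M (\<lambda>\<omega>. (I k \<omega> - q) * (I l \<omega> - q))" for k l unfolding I_def
    by (rule pair_int[where B=1 and f="\<lambda>a b. (h a - q) * (h b - q)"]) (use prodb in auto)
  have Eq2: "expectation (I 2) = q"
    unfolding q_def' I_def by (rule distr_int_eq[OF A1' deg_meas deg_meas])
  have cov: "c = expectation (\<lambda>\<omega>. (I 1 \<omega> - q) * (I 2 \<omega> - q))"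
    unfolding c_def covariance_def Eq2 q_def' ..
  have off: "expectation (\<lambda>\<omega>. (I k \<omega> - q) * (I l \<omega> - q)) = c"
    if "k \<in> A" "l \<in> A" "k \<noteq> l" for k l
  proof -
    have "expectation (\<lambda>\<omega>. (\<lambda>(a,b). (h a - q) * (h b - q)) (degree kn X n k \<omega>, degree kn X n l \<omega>))
        = expectation (\<lambda>\<omega>. (\<lambda>(a,b). (h a - q) * (h b - q)) (degree kn X n 1 \<omega>, degree kn X n 2 \<omega>))"
      by (rule distr_int_eq[OF A2' deg_pair_meas deg_pair_meas]) (use that in \<open>auto simp: A_def K_def\<close>)
    then show ?thesis unfolding cov I_def by simp
  qed
  have termb: "expectation (\<lambda>\<omega>. (I k \<omega> - q) * (I l \<omega> - q)) \<le> (if k = l then 1 else 0) + \<bar>c\<bar>"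
    if "k \<in> A" "l \<in> A" for k l
  proof (cases "k = l")
    case True
    have "expectation (\<lambda>\<omega>. (I k \<omega> - q) * (I l \<omega> - q)) \<le> expectation (\<lambda>_. 1::real)"
      by (rule integral_mono) (use intP prodb in \<open>auto simp: I_def abs_le_iff\<close>)
    then show ?thesis using True by (simp add: prob_space)
  next
    case False
    then show ?thesis using off[OF that False] by simp
  qed
  have emp: "emp_pmf kn X n \<omega> d - q = (\<Sum>k\<in>A. (I k \<omega> - q)) / real K" for \<omega>
    unfolding emp_eq A_def K_def I_def h_def using Kpos unfolding K_def
    by (simp add: sum_subtractf field_simps)
  have sq: "(emp_pmf kn X n \<omega> d - q)^2 = (\<Sum>k\<in>A. \<Sum>l\<in>A. (I k \<omega> - q) * (I l \<omega> - q)) / (real K)^2" for \<omega>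
    unfolding emp power2_eq_square by (simp add: sum_product)
  have "expectation (\<lambda>\<omega>. (emp_pmf kn X n \<omega> d - q)^2)
      = (\<Sum>k\<in>A. \<Sum>l\<in>A. expectation (\<lambda>\<omega>. (I k \<omega> - q) * (I l \<omega> - q))) / (real K)^2"
    unfolding sq by (simp add: Bochner_Integration.integral_sum intP integrable_sum)
  also have "\<dots> \<le> (\<Sum>k\<in>A. \<Sum>l\<in>A. (if k = l then 1 else 0) + \<bar>c\<bar>) / (real K)^2"
    by (intro divide_right_mono sum_mono termb) auto
  also have "(\<Sum>k\<in>A. \<Sum>l\<in>A. (if k = l then 1 else 0) + \<bar>c\<bar>) = real K + (real K)^2 * \<bar>c\<bar>"
    unfolding A_def by (simp add: sum.distrib power2_eq_square algebra_simps)
  also have "(real K + (real K)^2 * \<bar>c\<bar>) / (real K)^2 = 1 / real K + \<bar>c\<bar>"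
    using Kpos by (simp add: field_simps power2_eq_square)
  finally show ?thesis unfolding K_def c_def I_def h_def .
qed

lemma cdf_at:
  fixes f :: "'a \<Rightarrow> nat"
  assumes f: "f \<in> measurable M (count_space UNIV)" and y: "real d - 1 < y" "y < real d"
  shows "cdf (distr M borel (\<lambda>\<omega>. real (f \<omega>))) y = prob {\<omega>\<in>space M. f \<omega> < d}"
proof -
  have fm: "(\<lambda>\<omega>. real (f \<omega>)) \<in> borel_measurable M"
    using f by (rule measurable_compose) simp
  have "(\<lambda>\<omega>. real (f \<omega>)) -` {..y} \<inter> space M = {\<omega>\<in>space M. f \<omega> < d}"
  proof -
    have key: "real m \<le> y \<longleftrightarrow> m < d" for m :: nat
    proof
      assume "real m \<le> y" then have "real m < real d" using y by auto
      then show "m < d" by simp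
    next
      assume "m < d" then have "Suc m \<le> d" by simp
      then have "real (Suc m) \<le> real d" by (simp only: of_nat_le_iff)
      then have "real m + 1 \<le> real d" by simp
      then show "real m \<le> y" using y by simp
    qed
    show ?thesis using key by auto
  qed
  then show ?thesis unfolding cdf_def2 by (simp add: measure_distr[OF fm])
qed

lemma cdf_cont:
  fixes f :: "'a \<Rightarrow> nat"
  assumes f: "f \<in> measurable M (count_space UNIV)"
  shows "isCont (cdf (distr M borel (\<lambda>\<omega>. real (f \<omega>)))) (real d - 1/2)"
proof -
  let ?F = "cdf (distr M borel (\<lambda>\<omega>. real (f \<omega>)))"
  have "eventually (\<lambda>y. ?F y = ?F (real d - 1/2)) (at (real d - 1/2))"
    unfolding eventually_at
  proof (intro exI[of _ "1/2"] conjI ballI impI)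
    fix y :: real assume "y \<in> UNIV" "y \<noteq> real d - 1/2 \<and> dist y (real d - 1/2) < 1/2"
    then have "\<bar>y - (real d - 1/2)\<bar> < 1/2" by (simp add: dist_real_def)
    then have y1: "real d - 1 < y" and y2: "y < real d" by arith+
    have e1: "?F y = prob {\<omega>\<in>space M. f \<omega> < d}" by (rule cdf_at[OF f y1 y2])
    have e2: "?F (real d - 1/2) = prob {\<omega>\<in>space M. f \<omega> < d}" by (rule cdf_at[OF f]) auto
    show "?F y = ?F (real d - 1/2)" unfolding e1 e2 ..
  qed simp
  then show ?thesis unfolding isCont_def by (rule tendsto_eventually)
qed

lemma prob_eq_diff:
  fixes f :: "'a \<Rightarrow> nat"
  assumes f[measurable]: "f \<in> measurable M (count_space UNIV)"
  shows "prob {\<omega>\<in>space M. f \<omega> = d} = prob {\<omega>\<in>space M. f \<omega> < Suc d} - prob {\<omega>\<in>space M. f \<omega> < d}"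
proof -
  have "{\<omega>\<in>space M. f \<omega> = d} = {\<omega>\<in>space M. f \<omega> < Suc d} - {\<omega>\<in>space M. f \<omega> < d}" by auto
  then show ?thesis by (simp add: finite_measure_Diff subset_eq)
qed

lemma cdf_lim:
  fixes f :: "nat \<Rightarrow> 'a \<Rightarrow> nat" and g :: "'a \<Rightarrow> nat"
  assumes f: "\<And>n. f n \<in> measurable M (count_space UNIV)" and g: "g \<in> measurable M (count_space UNIV)"
    and B: "weak_conv_m (\<lambda>n. distr M borel (\<lambda>\<omega>. real (f n \<omega>))) (distr M borel (\<lambda>\<omega>. real (g \<omega>)))"
  shows "(\<lambda>n. prob {\<omega>\<in>space M. f n \<omega> = d}) \<longlonglongrightarrow> prob {\<omega>\<in>space M. g \<omega> = d}"
proof -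
  have lt: "(\<lambda>n. prob {\<omega>\<in>space M. f n \<omega> < e}) \<longlonglongrightarrow> prob {\<omega>\<in>space M. g \<omega> < e}" for e
  proof -
    have "(\<lambda>n. cdf (distr M borel (\<lambda>\<omega>. real (f n \<omega>))) (real e - 1/2))
        \<longlonglongrightarrow> cdf (distr M borel (\<lambda>\<omega>. real (g \<omega>))) (real e - 1/2)"
      using B cdf_cont[OF g] unfolding weak_conv_m_def weak_conv_def by blast
    moreover have "real e - 1 < real e - 1/2" "real e - 1/2 < real e" by auto
    ultimately show ?thesis using cdf_at[OF f] cdf_at[OF g] by simp
  qed
  show ?thesis unfolding prob_eq_diff[OF f] prob_eq_diff[OF g]
    by (intro tendsto_diff lt)
qed

lemma expect_ind: "expectation (\<lambda>\<omega>. if degree kn X n k \<omega> = d then 1 else (0::real))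
    = prob {\<omega>\<in>space M. degree kn X n k \<omega> = d}"
proof -
  have [measurable]: "degree kn X n k \<in> measurable M (count_space UNIV)" using deg_meas by auto
  have "expectation (\<lambda>\<omega>. if degree kn X n k \<omega> = d then 1 else (0::real))
     = expectation (indicator {\<omega>\<in>space M. degree kn X n k \<omega> = d})"
    by (rule Bochner_Integration.integral_cong) (auto simp: indicator_def)
  also have "\<dots> = prob {\<omega>\<in>space M. degree kn X n k \<omega> = d}"
    by simp
  finally show ?thesis .
qed

lemma emp_le1: "emp_pmf kn X n \<omega> d \<le> 1"
proof -
  have "card {k \<in> {1..kn n}. degree kn X n k \<omega> = d} \<le> card {1..kn n}" by (rule card_mono) auto
  then show ?thesis unfolding emp_pmf_def by (cases "kn n = 0") (auto simp: divide_le_eq_1)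
qed

lemma emp_ge0: "emp_pmf kn X n \<omega> d \<ge> 0"
  unfolding emp_pmf_def by simp

lemma conv_d:
  fixes D :: "'a \<Rightarrow> nat" and d :: nat and \<eta> :: real
  assumes kn_ge2: "\<And>n. n \<ge> 2 \<Longrightarrow> kn n \<ge> 2"
    and kn_lim: "filterlim kn at_top sequentially"
    and A1: "\<And>n k. n \<ge> 2 \<Longrightarrow> k \<in> {1..kn n} \<Longrightarrow>
           distr M (count_space UNIV) (degree kn X n k) = distr M (count_space UNIV) (degree kn X n 1)"
    and A2: "\<And>n k l. n \<ge> 2 \<Longrightarrow> k \<in> {1..kn n} \<Longrightarrow> l \<in> {1..kn n} \<Longrightarrow> k \<noteq> l \<Longrightarrow>
           distr M (count_space UNIV) (\<lambda>\<omega>. (degree kn X n k \<omega>, degree kn X n l \<omega>))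
         = distr M (count_space UNIV) (\<lambda>\<omega>. (degree kn X n 1 \<omega>, degree kn X n 2 \<omega>))"
    and D_meas: "D \<in> measurable M (count_space UNIV)"
    and B: "weak_conv_m (\<lambda>n. distr M borel (\<lambda>\<omega>. real (degree kn X n 1 \<omega>)))
                        (distr M borel (\<lambda>\<omega>. real (D \<omega>)))"
    and C: "(\<lambda>n. covariance M (\<lambda>\<omega>. if degree kn X n 1 \<omega> = d then 1 else 0)
                                     (\<lambda>\<omega>. if degree kn X n 2 \<omega> = d then 1 else 0))
                 \<longlonglongrightarrow> 0"
    and eta: "\<eta> > 0"
  shows "(\<lambda>n. prob {\<omega>\<in>space M. \<bar>emp_pmf kn X n \<omega> d - prob {\<omega>\<in>space M. D \<omega> = d}\<bar> > \<eta>}) \<longlonglongrightarrow> 0"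
proof -
  define pd where "pd = prob {\<omega>\<in>space M. D \<omega> = d}"
  define q where "q n = expectation (\<lambda>\<omega>. if degree kn X n 1 \<omega> = d then 1 else (0::real))" for n
  define c where "c n = covariance M (\<lambda>\<omega>. if degree kn X n 1 \<omega> = d then 1 else (0::real))
                                     (\<lambda>\<omega>. if degree kn X n 2 \<omega> = d then 1 else 0)" for n
  define b where "b n = 1 / real (kn n) + \<bar>c n\<bar>" for n
  have qp: "q \<longlonglongrightarrow> pd"
    unfolding q_def expect_ind pd_def by (rule cdf_lim[OF deg_meas D_meas B])
  have b0: "b \<longlonglongrightarrow> 0"
  proof -
    have "filterlim (\<lambda>n. real (kn n)) at_top sequentially"
      by (rule filterlim_compose[OF filterlim_real_sequentially kn_lim])
    then have "(\<lambda>n. inverse (real (kn n))) \<longlonglongrightarrow> 0" by (rule tendsto_inverse_0_at_top)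
    moreover have "(\<lambda>n. \<bar>c n\<bar>) \<longlonglongrightarrow> 0" using tendsto_rabs[OF C] unfolding c_def by simp
    ultimately show ?thesis unfolding b_def using tendsto_add by (fastforce simp: divide_inverse)
  qed
  have q01: "0 \<le> q n" "q n \<le> 1" for n unfolding q_def expect_ind by auto
  have ev: "eventually (\<lambda>n. \<bar>q n - pd\<bar> < \<eta>/2) sequentially"
  proof -
    have "eventually (\<lambda>n. dist (q n) pd < \<eta>/2) sequentially"
      by (rule tendstoD[OF qp]) (use eta in simp)
    then show ?thesis by (simp add: dist_real_def)
  qed
  have bound: "prob {\<omega>\<in>space M. \<bar>emp_pmf kn X n \<omega> d - pd\<bar> > \<eta>} \<le> b n / (\<eta>/2)^2"
    if n2: "n \<ge> 2" and qn: "\<bar>q n - pd\<bar> < \<eta>/2" for n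
  proof -
    have [measurable]: "(\<lambda>\<omega>. emp_pmf kn X n \<omega> d) \<in> borel_measurable M" by (rule emp_meas)
    have sqb: "norm ((emp_pmf kn X n \<omega> d - q n)^2) \<le> 1" for \<omega>
    proof -
      have "\<bar>emp_pmf kn X n \<omega> d - q n\<bar> \<le> 1"
        using emp_le1[of n \<omega> d] emp_ge0[of n \<omega> d] q01[of n] by (auto simp: abs_le_iff)
      then show ?thesis by (simp add: abs_square_le_1)
    qed
    have int2: "integrable M (\<lambda>\<omega>. (emp_pmf kn X n \<omega> d - q n)^2)"
      by (rule integrable_const_bound[where B=1]) (use sqb in auto)
    have "prob {\<omega>\<in>space M. \<bar>emp_pmf kn X n \<omega> d - pd\<bar> > \<eta>}
        \<le> prob {\<omega>\<in>space M. \<eta>/2 \<le> \<bar>emp_pmf kn X n \<omega> d - q n\<bar>}"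
    proof (rule finite_measure_mono)
      show "{\<omega>\<in>space M. \<bar>emp_pmf kn X n \<omega> d - pd\<bar> > \<eta>} \<subseteq> {\<omega>\<in>space M. \<eta>/2 \<le> \<bar>emp_pmf kn X n \<omega> d - q n\<bar>}"
      proof safe
        fix \<omega> assume "\<eta> < \<bar>emp_pmf kn X n \<omega> d - pd\<bar>"
        moreover have "\<bar>emp_pmf kn X n \<omega> d - pd\<bar> \<le> \<bar>emp_pmf kn X n \<omega> d - q n\<bar> + \<bar>q n - pd\<bar>"
          using abs_triangle_ineq[of "emp_pmf kn X n \<omega> d - q n" "q n - pd"] by simp
        ultimately show "\<eta>/2 \<le> \<bar>emp_pmf kn X n \<omega> d - q n\<bar>" using qn by linarith
      qed
    qed simp
    also have "\<dots> \<le> expectation (\<lambda>\<omega>. (emp_pmf kn X n \<omega> d - q n)^2) / (\<eta>/2)^2"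
      by (rule second_moment_method) (use int2 eta in auto)
    also have "\<dots> \<le> b n / (\<eta>/2)^2"
    proof (rule divide_right_mono)
      have "2 \<le> kn n" using kn_ge2 n2 by auto
      have "(2::nat) \<in> {1..kn n}" using \<open>2 \<le> kn n\<close> by auto
      show "expectation (\<lambda>\<omega>. (emp_pmf kn X n \<omega> d - q n)^2) \<le> b n"
        unfolding b_def c_def q_def
        by (rule mom_bound[of n d, OF \<open>2 \<le> kn n\<close> A1[OF n2 \<open>2 \<in> {1..kn n}\<close>] A2[OF n2]])
    qed simp
    finally show ?thesis .
  qed
  have "(\<lambda>n. b n / (\<eta>/2)^2) \<longlonglongrightarrow> 0 / (\<eta>/2)^2" by (intro tendsto_divide b0 tendsto_const) (use eta in auto)
  then have up: "(\<lambda>n. b n / (\<eta>/2)^2) \<longlonglongrightarrow> 0" by simp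
  show ?thesis unfolding pd_def[symmetric]
  proof (rule tendsto_sandwich[OF _ _ tendsto_const up])
    show "\<forall>\<^sub>F n in sequentially. 0 \<le> prob {\<omega>\<in>space M. \<bar>emp_pmf kn X n \<omega> d - pd\<bar> > \<eta>}" by simp
    show "\<forall>\<^sub>F n in sequentially. prob {\<omega>\<in>space M. \<bar>emp_pmf kn X n \<omega> d - pd\<bar> > \<eta>} \<le> b n / (\<eta>/2)^2"
      using ev eventually_ge_at_top[of 2] by eventually_elim (rule bound)
  qed
qed

end

theorem proposition5:
  fixes M :: "'a measure"
    and kn :: "nat \<Rightarrow> nat"
    and X :: "nat \<Rightarrow> nat \<Rightarrow> nat \<Rightarrow> 'a \<Rightarrow> bool"
    and D :: "'a \<Rightarrow> nat"
    and p :: "nat \<Rightarrow> real"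
  assumes "prob_space M"
    and meas_edges: "\<And>n k l. X n k l \<in> measurable M (count_space UNIV)"
    and kn_ge2: "\<And>n. n \<ge> 2 \<Longrightarrow> kn n \<ge> 2"
    and kn_lim: "filterlim kn at_top sequentially"
    and A1: "\<And>n k. n \<ge> 2 \<Longrightarrow> k \<in> {1..kn n} \<Longrightarrow>
           distr M (count_space UNIV) (degree kn X n k) = distr M (count_space UNIV) (degree kn X n 1)"
    and A2: "\<And>n k l. n \<ge> 2 \<Longrightarrow> k \<in> {1..kn n} \<Longrightarrow> l \<in> {1..kn n} \<Longrightarrow> k \<noteq> l \<Longrightarrow>
           distr M (count_space UNIV) (\<lambda>\<omega>. (degree kn X n k \<omega>, degree kn X n l \<omega>))
         = distr M (count_space UNIV) (\<lambda>\<omega>. (degree kn X n 1 \<omega>, degree kn X n 2 \<omega>))"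
    and D_meas: "D \<in> measurable M (count_space UNIV)"
    and p_pmf: "\<And>d. p d = measure M {\<omega> \<in> space M. D \<omega> = d}"
    and B: "weak_conv_m (\<lambda>n. distr M borel (\<lambda>\<omega>. real (degree kn X n 1 \<omega>)))
                        (distr M borel (\<lambda>\<omega>. real (D \<omega>)))"
    and C: "\<And>d. (\<lambda>n. covariance M (\<lambda>\<omega>. if degree kn X n 1 \<omega> = d then 1 else 0)
                                     (\<lambda>\<omega>. if degree kn X n 2 \<omega> = d then 1 else 0))
                 \<longlonglongrightarrow> 0"
  shows "\<And>\<epsilon>. \<epsilon> > 0 \<Longrightarrow>
    (\<lambda>n. measure M {\<omega> \<in> space M. dTV (emp_pmf kn X n \<omega>) p > \<epsilon>}) \<longlonglongrightarrow> 0"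
  proof -
  fix \<epsilon> :: real assume eps: "\<epsilon> > 0"
  interpret prob_space M by fact
  have PS: "prob_space M" by fact
  have pD: "p d = prob {\<omega>\<in>space M. D \<omega> = d}" for d by (rule p_pmf)
  have psum: "p sums 1"
  proof -
    have "(\<lambda>d. prob {\<omega>\<in>space M. D \<omega> = d}) sums prob (\<Union>d. {\<omega>\<in>space M. D \<omega> = d})"
    proof (rule finite_measure_UNION)
      have [measurable]: "D \<in> measurable M (count_space UNIV)" by (rule D_meas)
      show "range (\<lambda>d. {\<omega>\<in>space M. D \<omega> = d}) \<subseteq> events" by auto
      show "disjoint_family (\<lambda>d. {\<omega>\<in>space M. D \<omega> = d})" by (auto simp: disjoint_family_on_def)
    qed
    moreover have "(\<Union>d. {\<omega>\<in>space M. D \<omega> = d}) = space M" by auto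
    moreover have "p = (\<lambda>d. prob {\<omega>\<in>space M. D \<omega> = d})" using pD by auto
    ultimately show ?thesis using prob_space by simp
  qed
  have p0: "p d \<ge> 0" for d using pD by simp
  have "(\<lambda>N. \<Sum>d<N. p d) \<longlonglongrightarrow> 1" using psum by (simp add: sums_def)
  then have "eventually (\<lambda>N. dist (\<Sum>d<N. p d) 1 < \<epsilon>/4) sequentially"
    by (rule tendstoD) (use eps in simp)
  then obtain N0 where N0: "\<And>N. N \<ge> N0 \<Longrightarrow> dist (\<Sum>d<N. p d) 1 < \<epsilon>/4"
    unfolding eventually_sequentially by blast
  define N where "N = Suc N0"
  have Npos: "N > 0" unfolding N_def by simp
  have tN: "1 - (\<Sum>d<N. p d) < \<epsilon>/4"
  proof -
    have "\<bar>(\<Sum>d<N. p d) - 1\<bar> < \<epsilon>/4" using N0[of N] unfolding N_def dist_real_def by simp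
    then show ?thesis by arith
  qed
  define \<eta> where "\<eta> = \<epsilon> / (2 * real N)"
  have eta: "\<eta> > 0" unfolding \<eta>_def using eps Npos by simp
  define E where "E n d = {\<omega>\<in>space M. \<bar>emp_pmf kn X n \<omega> d - p d\<bar> > \<eta>}" for n d
  have Emeas: "E n d \<in> events" for n d
  proof -
    have [measurable]: "(\<lambda>\<omega>. emp_pmf kn X n \<omega> d) \<in> borel_measurable M"
      by (rule emp_meas[OF PS meas_edges])
    show ?thesis unfolding E_def by measurable
  qed
  have Elim: "(\<lambda>n. prob (E n d)) \<longlonglongrightarrow> 0" for d
    unfolding E_def pD
    by (rule conv_d[OF PS meas_edges kn_ge2 kn_lim A1 A2 D_meas B C eta])
  have sub: "{\<omega> \<in> space M. dTV (emp_pmf kn X n \<omega>) p > \<epsilon>} \<subseteq> (\<Union>d\<in>{..<N}. E n d)"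
    if n2: "n \<ge> 2" for n
  proof
    fix \<omega> assume "\<omega> \<in> {\<omega> \<in> space M. dTV (emp_pmf kn X n \<omega>) p > \<epsilon>}"
    then have om: "\<omega> \<in> space M" and big: "dTV (emp_pmf kn X n \<omega>) p > \<epsilon>" by auto
    show "\<omega> \<in> (\<Union>d\<in>{..<N}. E n d)"
    proof (rule ccontr)
      assume "\<omega> \<notin> (\<Union>d\<in>{..<N}. E n d)"
      then have small: "\<bar>emp_pmf kn X n \<omega> d - p d\<bar> \<le> \<eta>" if "d < N" for d
        using that om unfolding E_def by force
      have "kn n > 0" using kn_ge2[OF n2] by simp
      have tv: "(\<Sum>d. \<bar>emp_pmf kn X n \<omega> d - p d\<bar>) \<le> 2 * (\<Sum>d<N. \<bar>emp_pmf kn X n \<omega> d - p d\<bar>) + 2 * (1 - (\<Sum>d<N. p d))"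
        by (rule tv_bound[OF emp_sums[of kn n X \<omega>, OF \<open>kn n > 0\<close>] psum emp_ge0[OF PS meas_edges] p0])
      have "(\<Sum>d<N. \<bar>emp_pmf kn X n \<omega> d - p d\<bar>) \<le> real (card {..<N}) * \<eta>"
        by (rule sum_bounded_above) (use small in auto)
      also have "real (card {..<N}) * \<eta> = \<epsilon>/2" unfolding \<eta>_def using Npos by simp
      finally have "(\<Sum>d<N. \<bar>emp_pmf kn X n \<omega> d - p d\<bar>) \<le> \<epsilon>/2" .
      have "dTV (emp_pmf kn X n \<omega>) p < \<epsilon>" unfolding dTV_def by (rule arith_aux[OF tv \<open>(\<Sum>d<N. \<bar>emp_pmf kn X n \<omega> d - p d\<bar>) \<le> \<epsilon>/2\<close> tN eps])
      then show False using big by simp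
    qed
  qed
  have bnd: "prob {\<omega> \<in> space M. dTV (emp_pmf kn X n \<omega>) p > \<epsilon>} \<le> (\<Sum>d<N. prob (E n d))"
    if n2: "n \<ge> 2" for n
  proof -
    have "prob {\<omega> \<in> space M. dTV (emp_pmf kn X n \<omega>) p > \<epsilon>} \<le> prob (\<Union>d\<in>{..<N}. E n d)"
    proof (cases "{\<omega> \<in> space M. dTV (emp_pmf kn X n \<omega>) p > \<epsilon>} \<in> events")
      case True
      show ?thesis by (rule finite_measure_mono[OF sub[OF n2]]) (use Emeas in auto)
    next
      case False
      then show ?thesis by (simp add: measure_notin_sets)
    qed
    also have "\<dots> \<le> (\<Sum>d<N. prob (E n d))"
      by (rule finite_measure_subadditive_finite) (use Emeas in auto)
    finally show ?thesis .
  qed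
  have up: "(\<lambda>n. \<Sum>d<N. prob (E n d)) \<longlonglongrightarrow> 0"
    by (rule tendsto_null_sum) (rule Elim)
  show "(\<lambda>n. measure M {\<omega> \<in> space M. dTV (emp_pmf kn X n \<omega>) p > \<epsilon>}) \<longlonglongrightarrow> 0"
  proof (rule tendsto_sandwich[OF _ _ tendsto_const up])
    show "\<forall>\<^sub>F n in sequentially. 0 \<le> prob {\<omega> \<in> space M. dTV (emp_pmf kn X n \<omega>) p > \<epsilon>}" by simp
    show "\<forall>\<^sub>F n in sequentially. prob {\<omega> \<in> space M. dTV (emp_pmf kn X n \<omega>) p > \<epsilon>} \<le> (\<Sum>d<N. prob (E n d))"
      using eventually_ge_at_top[of 2] by eventually_elim (rule bnd)
  qed
qed

end
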